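(* Let $\Sigma=b^2M_nQ\Psi Q^\top M_n\in\mathbb R^{n\times n}$ be the steady-state covariance of the observables (notation in the context). Let $\psi_1=0$ be the eigenvalue of $\Sigma$ with eigenvector $\mathbf 1_n$, and let $\psi_2\le\dots\le\psi_n$ denote the remaining eigenvalues of $\Sigma$ (with multiplicity). Set $\tilde\psi_2=\psi_2(1-\frac1n)$ and $\tilde\psi_n=\psi_n(1-\frac1n)$. Then every diagonal entry $\sigma_i^2=\Sigma_{ii}$ satisfies $\tilde\psi_2\le\sigma_i^2\le\tilde\psi_n$ for all $i=1,\dots,n$.
   Context: $L$ is the Laplacian of a connected undirected simple graph with positive edge weights, $L=Q\Lambda Q^\top$, $Q=[q_1|\dots|q_n]$ orthogonal, $q_1=\mathbf 1_n/\sqrt n$, $\Lambda=\mathrm{diag}(0,\lambda_2,\dots,\lambda_n)$ with $0<\lambda_2\le\dots\le\lambda_n$; the delay satisfies $0\le\tau<\pi/(2\lambda_n)$; $b\neq0$; $M_n=I_n-\frac1n\mathbf 1_n\mathbf 1_n^\top$; $\Psi=\mathrm{diag}(0,\psi(\lambda_2),\dots,\psi(\lambda_n))$ with $\psi(\lambda)=\frac{\cos(\lambda\tau)}{2\lambda(1-\sin(\lambda\tau))}$. *)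

theory Defs
  imports "Jordan_Normal_Form.Char_Poly"
begin

text \<open>Undirected simple graph on vertices 0..n-1 with positive edge weights:
  w i j > 0 iff {i,j} is an edge, w i j = 0 otherwise.\<close>
definition weighted_simple_graph :: "nat \<Rightarrow> (nat \<Rightarrow> nat \<Rightarrow> real) \<Rightarrow> bool" where
  "weighted_simple_graph n w \<longleftrightarrow>
     (\<forall>i<n. w i i = 0) \<and> (\<forall>i<n. \<forall>j<n. w i j = w j i \<and> w i j \<ge> 0)"

definition graph_connected :: "nat \<Rightarrow> (nat \<Rightarrow> nat \<Rightarrow> real) \<Rightarrow> bool" where
  "graph_connected n w \<longleftrightarrow>
     (\<forall>i<n. \<forall>j<n. (i, j) \<in> {(a, b). a < n \<and> b < n \<and> w a b > 0}\<^sup>*)"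

definition laplacian :: "nat \<Rightarrow> (nat \<Rightarrow> nat \<Rightarrow> real) \<Rightarrow> real mat" where
  "laplacian n w = mat n n (\<lambda>(i, j). if i = j then (\<Sum>k<n. w i k) else - w i j)"

definition centering :: "nat \<Rightarrow> real mat" where
  "centering n = 1\<^sub>m n - mat n n (\<lambda>_. 1 / real n)"

definition psi :: "real \<Rightarrow> real \<Rightarrow> real" where
  "psi \<tau> l = cos (l * \<tau>) / (2 * l * (1 - sin (l * \<tau>)))"

end

theory Submission
  imports Defs
begin

theorem lemma9:
  fixes n :: nat and w :: "nat \<Rightarrow> nat \<Rightarrow> real" and Q :: "real mat"
    and lam :: "nat \<Rightarrow> real" and \<tau> b :: real and \<psi>s :: "real list"
  assumes n2: "n \<ge> 2"
    and graph: "weighted_simple_graph n w"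
    and conn: "graph_connected n w"
    and Qcar: "Q \<in> carrier_mat n n"
    and Qorth: "Q\<^sup>T * Q = 1\<^sub>m n" "Q * Q\<^sup>T = 1\<^sub>m n"
    and Qcol1: "col Q 0 = vec n (\<lambda>_. 1 / sqrt (real n))"
    and eig: "laplacian n w = Q * mat_diag n lam * Q\<^sup>T"
    and lam0: "lam 0 = 0"
    and lampos: "0 < lam 1"
    and lammono: "\<And>i j. 1 \<le> i \<Longrightarrow> i \<le> j \<Longrightarrow> j < n \<Longrightarrow> lam i \<le> lam j"
    and tau: "0 \<le> \<tau>" "\<tau> < pi / (2 * lam (n - 1))"
    and b: "b \<noteq> 0"
    and \<psi>s_len: "length \<psi>s = n - 1"
    and \<psi>s_sorted: "sorted \<psi>s"
    and \<psi>s_eig: "char_poly (b\<^sup>2 \<cdot>\<^sub>m (centering n * Q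
                    * mat_diag n (\<lambda>k. if k = 0 then 0 else psi \<tau> (lam k))
                    * Q\<^sup>T * centering n))
                  = [:0, 1:] * (\<Prod>x\<leftarrow>\<psi>s. [:- x, 1:])"
  shows "\<forall>i<n.
     hd \<psi>s * (1 - 1 / real n) \<le> (b\<^sup>2 \<cdot>\<^sub>m (centering n * Q
                    * mat_diag n (\<lambda>k. if k = 0 then 0 else psi \<tau> (lam k))
                    * Q\<^sup>T * centering n)) $$ (i, i)
   \<and> (b\<^sup>2 \<cdot>\<^sub>m (centering n * Q
                    * mat_diag n (\<lambda>k. if k = 0 then 0 else psi \<tau> (lam k))
                    * Q\<^sup>T * centering n)) $$ (i, i) \<le> last \<psi>s * (1 - 1 / real n)"
proof -
  define d where "d = (\<lambda>k. if k = 0 then 0 else psi \<tau> (lam k))"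
  define D where "D = mat_diag n d"
  define M where "M = centering n"
  define Sig where "Sig = b\<^sup>2 \<cdot>\<^sub>m (M * Q * D * Q\<^sup>T * M)"
  have SigE: "b\<^sup>2 \<cdot>\<^sub>m (centering n * Q * mat_diag n (\<lambda>k. if k = 0 then 0 else psi \<tau> (lam k)) * Q\<^sup>T * centering n) = Sig"
    unfolding Sig_def M_def D_def d_def ..
  have Dc: "D \<in> carrier_mat n n" unfolding D_def by simp
  have Mc: "M \<in> carrier_mat n n" unfolding M_def centering_def by (rule minus_carrier_mat) auto
  have QTc: "Q\<^sup>T \<in> carrier_mat n n" using Qcar by simp
  have npos: "real n > 0" using n2 by simp
  have Mij: "\<And>i j. i < n \<Longrightarrow> j < n \<Longrightarrow> M $$ (i,j) = (if i = j then 1 else 0) - 1 / real n"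
    unfolding M_def centering_def by (subst index_minus_mat) auto
  have Q0: "\<And>i. i < n \<Longrightarrow> Q $$ (i,0) = 1 / sqrt (real n)"
  proof -
    fix i assume i: "i < n"
    have "col Q 0 $ i = 1 / sqrt (real n)" using Qcol1 i by simp
    thus "Q $$ (i,0) = 1 / sqrt (real n)" using i Qcar n2 by simp
  qed
  have orth1: "\<And>j k. j < n \<Longrightarrow> k < n \<Longrightarrow> (\<Sum>l<n. Q $$ (l,j) * Q $$ (l,k)) = (if j = k then 1 else 0)"
  proof -
    fix j k assume jk: "j<n" "k<n"
    have "(Q\<^sup>T * Q) $$ (j,k) = (\<Sum>l<n. Q $$ (l,j) * Q $$ (l,k))"
      using Qcar jk by (simp add: scalar_prod_def lessThan_atLeast0)
    thus "(\<Sum>l<n. Q $$ (l,j) * Q $$ (l,k)) = (if j = k then 1 else 0)" using Qorth(1) jk by simp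
  qed
  have orth2: "\<And>j k. j < n \<Longrightarrow> k < n \<Longrightarrow> (\<Sum>l<n. Q $$ (j,l) * Q $$ (k,l)) = (if j = k then 1 else 0)"
  proof -
    fix j k assume jk: "j<n" "k<n"
    have "(Q * Q\<^sup>T) $$ (j,k) = (\<Sum>l<n. Q $$ (j,l) * Q $$ (k,l))"
      using Qcar jk by (simp add: scalar_prod_def lessThan_atLeast0)
    thus "(\<Sum>l<n. Q $$ (j,l) * Q $$ (k,l)) = (if j = k then 1 else 0)" using Qorth(2) jk by simp
  qed
  have colsum: "\<And>j. 1 \<le> j \<Longrightarrow> j < n \<Longrightarrow> (\<Sum>l<n. Q $$ (l,j)) = 0"
  proof -
    fix j assume j: "1 \<le> j" "j < n"
    have "(\<Sum>l<n. Q $$ (l,0) * Q $$ (l,j)) = 0" using orth1[of 0 j] j by simp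
    also have "(\<Sum>l<n. Q $$ (l,0) * Q $$ (l,j)) = (1 / sqrt (real n)) * (\<Sum>l<n. Q $$ (l,j))"
      by (simp add: Q0 sum_distrib_left)
    finally show "(\<Sum>l<n. Q $$ (l,j)) = 0" using npos by simp
  qed
  have MQ: "M * Q = mat n n (\<lambda>(i,j). Q $$ (i,j) - (\<Sum>l<n. Q $$ (l,j)) / real n)"
  proof (rule eq_matI)
    fix i j assume ij: "i < dim_row (mat n n (\<lambda>(i,j). Q $$ (i,j) - (\<Sum>l<n. Q $$ (l,j)) / real n))"
      "j < dim_col (mat n n (\<lambda>(i,j). Q $$ (i,j) - (\<Sum>l<n. Q $$ (l,j)) / real n))"
    hence i: "i < n" and j: "j < n" by auto
    have "(M * Q) $$ (i,j) = (\<Sum>l<n. M $$ (i,l) * Q $$ (l,j))"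
      using Mc Qcar i j by (simp add: scalar_prod_def lessThan_atLeast0)
    also have "\<dots> = (\<Sum>l<n. (if i = l then Q $$ (l,j) else 0) - Q $$ (l,j) / real n)"
      by (rule sum.cong, simp, simp add: Mij i algebra_simps)
    also have "\<dots> = Q $$ (i,j) - (\<Sum>l<n. Q $$ (l,j)) / real n"
      using i by (simp add: sum_subtractf sum_divide_distrib)
    finally show "(M * Q) $$ (i,j) = mat n n (\<lambda>(i,j). Q $$ (i,j) - (\<Sum>l<n. Q $$ (l,j)) / real n) $$ (i,j)"
      using i j by simp
  qed (use Mc Qcar in auto)
  have QTM: "Q\<^sup>T * M = mat n n (\<lambda>(i,j). Q $$ (j,i) - (\<Sum>l<n. Q $$ (l,i)) / real n)"
  proof (rule eq_matI)
    fix i j assume ij: "i < dim_row (mat n n (\<lambda>(i,j). Q $$ (j,i) - (\<Sum>l<n. Q $$ (l,i)) / real n))"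
      "j < dim_col (mat n n (\<lambda>(i,j). Q $$ (j,i) - (\<Sum>l<n. Q $$ (l,i)) / real n))"
    hence i: "i < n" and j: "j < n" by auto
    have "(Q\<^sup>T * M) $$ (i,j) = (\<Sum>l<n. Q $$ (l,i) * M $$ (l,j))"
      using Mc Qcar i j by (simp add: scalar_prod_def lessThan_atLeast0)
    also have "\<dots> = (\<Sum>l<n. (if l = j then Q $$ (l,i) else 0) - Q $$ (l,i) / real n)"
      by (rule sum.cong, simp, simp add: Mij j algebra_simps)
    also have "\<dots> = Q $$ (j,i) - (\<Sum>l<n. Q $$ (l,i)) / real n"
      using j by (simp add: sum_subtractf sum_divide_distrib)
    finally show "(Q\<^sup>T * M) $$ (i,j) = mat n n (\<lambda>(i,j). Q $$ (j,i) - (\<Sum>l<n. Q $$ (l,i)) / real n) $$ (i,j)"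
      using i j by simp
  qed (use Mc Qcar in auto)
  have QD: "Q * D = mat n n (\<lambda>(i,j). Q $$ (i,j) * d j)"
    unfolding D_def using Qcar by (rule mat_diag_mult_right)
  have MQD: "M * Q * D = Q * D"
    unfolding QD unfolding D_def
    by (subst mat_diag_mult_right[of _ n], use Mc Qcar in simp,
        rule eq_matI, auto simp: MQ colsum d_def)
  have DQM: "D * (Q\<^sup>T * M) = D * Q\<^sup>T"
    unfolding D_def
    by (subst mat_diag_mult_left[of _ n n], use Mc Qcar in simp,
        subst mat_diag_mult_left[of _ n n], use Mc Qcar in simp,
        rule eq_matI, auto simp: QTM colsum d_def Qcar[THEN carrier_matD(1)] Qcar[THEN carrier_matD(2)])
  have S: "M * Q * D * Q\<^sup>T * M = Q * D * Q\<^sup>T"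
  proof -
    have "M * Q * D * Q\<^sup>T * M = (M * Q * D) * (Q\<^sup>T * M)"
      using Mc Qcar Dc QTc by (simp add: assoc_mult_mat[of _ n n _ n _ n])
    also have "\<dots> = Q * (D * (Q\<^sup>T * M))" unfolding MQD
      using Mc Qcar Dc QTc by (simp add: assoc_mult_mat[of _ n n _ n _ n])
    also have "\<dots> = Q * D * Q\<^sup>T" unfolding DQM
      using Mc Qcar Dc QTc by (simp add: assoc_mult_mat[of _ n n _ n _ n])
    finally show ?thesis .
  qed
  have Sig2: "Sig = b\<^sup>2 \<cdot>\<^sub>m (Q * D * Q\<^sup>T)" unfolding Sig_def S ..
  have Sigc: "Sig \<in> carrier_mat n n" unfolding Sig2 using Qcar Dc by simp
  have diag: "\<And>i. i<n \<Longrightarrow> Sig $$ (i,i) = (\<Sum>k<n. Q$$(i,k)^2 * (b^2 * d k))"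
  proof -
    fix i assume i: "i < n"
    have "Sig $$ (i,i) = b^2 * (\<Sum>k<n. Q$$(i,k) * d k * Q$$(i,k))"
      unfolding Sig2 QD using i Qcar by (simp add: scalar_prod_def lessThan_atLeast0)
    thus "Sig $$ (i,i) = (\<Sum>k<n. Q$$(i,k)^2 * (b^2 * d k))"
      by (simp add: sum_distrib_left power2_eq_square algebra_simps)
  qed
  have ln: "lam (n-1) > 0" using lampos lammono[of 1 "n-1"] n2 by (simp, linarith)
  have dpos: "\<And>k. 1 \<le> k \<Longrightarrow> k < n \<Longrightarrow> 0 < d k"
  proof -
    fix k assume k: "1 \<le> k" "k < n"
    have lk: "0 < lam k" "lam k \<le> lam (n-1)" using lampos lammono[of 1 k] lammono[of k "n-1"] k by auto
    have x0: "0 \<le> lam k * \<tau>" using lk tau by simp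
    have "lam k * \<tau> \<le> lam (n-1) * \<tau>" using lk tau by (simp add: mult_right_mono)
    also have "lam (n-1) * \<tau> < pi/2" using tau(2) ln by (simp add: field_simps)
    finally have x1: "lam k * \<tau> < pi/2" .
    have c: "cos (lam k * \<tau>) > 0" using x0 x1 by (intro cos_gt_zero_pi) auto
    have sc: "sin (lam k * \<tau>) ^ 2 + cos (lam k * \<tau>) ^ 2 = 1" by simp
    have s: "sin (lam k * \<tau>) < 1"
    proof (rule ccontr)
      assume "\<not> sin (lam k * \<tau>) < 1"
      hence "sin (lam k * \<tau>) = 1" using sin_le_one[of "lam k * \<tau>"] by linarith
      hence "cos (lam k * \<tau>) ^ 2 = 0" using sc by simp
      thus False using c by simp
    qed
    show "0 < d k" using k c s lk unfolding d_def psi_def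
      by (auto intro!: divide_pos_pos mult_pos_pos simp: mult.commute)
  qed
  have SQ: "Sig * Q = b\<^sup>2 \<cdot>\<^sub>m (Q * D)"
  proof -
    have "Sig * Q = b\<^sup>2 \<cdot>\<^sub>m (Q * D * Q\<^sup>T * Q)" unfolding Sig2
      using Qcar Dc by (subst mult_smult_assoc_mat[of _ n n]) auto
    also have "Q * D * Q\<^sup>T * Q = Q * D * (Q\<^sup>T * Q)"
      using Qcar Dc QTc by (simp add: assoc_mult_mat[of _ n n _ n _ n])
    also have "\<dots> = Q * D" using Qorth(1) Qcar Dc by simp
    finally show ?thesis .
  qed
  have mem: "\<And>k. 1 \<le> k \<Longrightarrow> k < n \<Longrightarrow> b^2 * d k \<in> set \<psi>s"
  proof -
    fix k assume k: "1 \<le> k" "k < n"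
    have "Sig *\<^sub>v col Q k = col (Sig * Q) k" using col_mult2[OF Sigc Qcar, of k] k by simp
    also have "\<dots> = (b^2 * d k) \<cdot>\<^sub>v col Q k"
      unfolding SQ QD using k Qcar by (intro eq_vecI) auto
    finally have Sv: "Sig *\<^sub>v col Q k = (b^2 * d k) \<cdot>\<^sub>v col Q k" .
    have nz: "col Q k \<noteq> 0\<^sub>v n"
    proof
      assume z: "col Q k = 0\<^sub>v n"
      have "\<And>l. l < n \<Longrightarrow> Q $$ (l,k) = 0"
      proof -
        fix l assume l: "l < n"
        have "col Q k $ l = 0" using z l by simp
        thus "Q $$ (l,k) = 0" using l k Qcar by simp
      qed
      hence "(\<Sum>l<n. Q $$ (l,k) * Q $$ (l,k)) = 0" by simp
      thus False using orth1[of k k] k by simp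
    qed
    have "eigenvector Sig (col Q k) (b^2 * d k)"
      unfolding eigenvector_def using Sv nz Sigc Qcar k by auto
    hence "eigenvalue Sig (b^2 * d k)" unfolding eigenvalue_def by blast
    hence r: "poly (char_poly Sig) (b^2 * d k) = 0" using eigenvalue_root_char_poly[OF Sigc] by simp
    have mu: "b^2 * d k \<noteq> 0" using dpos[OF k] b by simp
    have "poly (\<Prod>x\<leftarrow>\<psi>s. [:- x, 1:]) (b^2 * d k) = 0"
      using r mu \<psi>s_eig unfolding SigE by simp
    hence "\<exists>p\<in>set (map (\<lambda>x. [:- x, 1:]) \<psi>s). poly p (b^2 * d k) = 0"
      using poly_prod_list_zero_iff by blast
    thus "b^2 * d k \<in> set \<psi>s" by auto
  qed
  have ne: "\<psi>s \<noteq> []" using \<psi>s_len n2 by auto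
  have hdle: "\<And>x. x \<in> set \<psi>s \<Longrightarrow> hd \<psi>s \<le> x"
    using \<psi>s_sorted by (cases \<psi>s) auto
  have lastge: "\<And>x. x \<in> set \<psi>s \<Longrightarrow> x \<le> last \<psi>s"
  proof -
    fix x assume x: "x \<in> set \<psi>s"
    obtain ys z where e: "\<psi>s = ys @ [z]" using ne by (metis rev_exhaust)
    show "x \<le> last \<psi>s" using x \<psi>s_sorted unfolding e by (auto simp: sorted_append)
  qed
  have main: "\<And>i. i < n \<Longrightarrow> hd \<psi>s * (1 - 1 / real n) \<le> Sig $$ (i,i) \<and> Sig $$ (i,i) \<le> last \<psi>s * (1 - 1 / real n)"
  proof -
    fix i assume i: "i < n"
    have n0: "0 < n" using n2 by simp
    have "Sig $$ (i,i) = (\<Sum>k\<in>{0..<n}. Q$$(i,k)^2 * (b^2 * d k))" using diag[OF i] by (simp add: lessThan_atLeast0)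
    also have "\<dots> = (\<Sum>k\<in>{1..<n}. Q$$(i,k)^2 * (b^2 * d k))"
      using n0 by (subst sum.atLeast_Suc_lessThan) (auto simp: d_def)
    finally have e1: "Sig $$ (i,i) = (\<Sum>k\<in>{1..<n}. Q$$(i,k)^2 * (b^2 * d k))" .
    have "(\<Sum>k\<in>{0..<n}. Q$$(i,k)^2) = 1" using orth2[OF i i] by (simp add: lessThan_atLeast0 power2_eq_square)
    hence "Q$$(i,0)^2 + (\<Sum>k\<in>{1..<n}. Q$$(i,k)^2) = 1"
      using n0 by (subst (asm) sum.atLeast_Suc_lessThan) auto
    moreover have "Q$$(i,0)^2 = 1 / real n" using Q0[OF i] npos by (simp add: power_divide)
    ultimately have e2: "(\<Sum>k\<in>{1..<n}. Q$$(i,k)^2) = 1 - 1 / real n" by simp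
    have "hd \<psi>s * (1 - 1 / real n) = (\<Sum>k\<in>{1..<n}. Q$$(i,k)^2 * hd \<psi>s)"
      unfolding e2[symmetric] by (simp add: sum_distrib_right sum_distrib_left mult.commute)
    also have "\<dots> \<le> (\<Sum>k\<in>{1..<n}. Q$$(i,k)^2 * (b^2 * d k))"
      by (rule sum_mono, rule mult_left_mono, auto intro!: hdle mem)
    finally have A: "hd \<psi>s * (1 - 1 / real n) \<le> Sig $$ (i,i)" using e1 by simp
    have "(\<Sum>k\<in>{1..<n}. Q$$(i,k)^2 * (b^2 * d k)) \<le> (\<Sum>k\<in>{1..<n}. Q$$(i,k)^2 * last \<psi>s)"
      by (rule sum_mono, rule mult_left_mono, auto intro!: lastge mem)
    also have "\<dots> = last \<psi>s * (1 - 1 / real n)"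
      unfolding e2[symmetric] by (simp add: sum_distrib_right sum_distrib_left mult.commute)
    finally have B: "Sig $$ (i,i) \<le> last \<psi>s * (1 - 1 / real n)" using e1 by simp
    show "hd \<psi>s * (1 - 1 / real n) \<le> Sig $$ (i,i) \<and> Sig $$ (i,i) \<le> last \<psi>s * (1 - 1 / real n)"
      using A B by simp
  qed
  show ?thesis unfolding SigE using main by blast
qed

end
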